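(* Let $(Z_k)_{k\ge1}$ be independent symmetrical real-valued random variables with unit variance, let $(a_{n,k})_{1\le k\le n<\infty}$ be real numbers, set $X_n=\sum_{k=1}^n a_{n,k}Z_k$, and let $(u_n)$ be vectors in a Hilbert space $\mathbb{H}$. Suppose there exist constants $C>0$ and $\alpha>1$ such that $|a_{n,k}|\le C(n-k+1)^{-\alpha}$ for all $1\le k\le n$. If $\sum_{n=1}^\infty\|u_n\|^2<\infty$, then $\sum_{n=1}^\infty X_nu_n$ converges almost surely in $\mathbb{H}$, and so does $\sum_{n=1}^\infty \epsilon_nX_nu_n$ for every non-random choice of signs $(\epsilon_n)\in\{-1,1\}^{\mathbb{N}}$.
   Context: A real random variable $Z$ is symmetrical if $Z$ and $-Z$ have the same distribution; unit variance means $\mathbb{E}(Z^2)=1$. *)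

theory Defs
  imports "HOL-Probability.Probability"
begin

definition symmetric_rv :: "'a measure \<Rightarrow> ('a \<Rightarrow> real) \<Rightarrow> bool" where
  "symmetric_rv M Z \<longleftrightarrow> distr M borel Z = distr M borel (\<lambda>x. - Z x)"

end

theory Submission
  imports Defs
begin



lemma norm_lincomb: "norm (\<Sum>k\<in>K. c k *\<^sub>R (w k::'h::real_inner)) = sqrt (\<Sum>i\<in>K. \<Sum>l\<in>K. c i * c l * inner (w i) (w l))"
  by (simp add: norm_eq_sqrt_inner inner_sum_left inner_sum_right sum_distrib_left mult_ac, subst sum.swap, simp add: mult_ac)
lemma comp_any[measurable]: "(\<lambda>\<omega>. \<omega> k) \<in> borel_measurable (PiM (J::nat set) (\<lambda>_. borel::real measure))"
proof cases
  assume "k \<in> J" thus ?thesis by (rule measurable_component_singleton[where M="\<lambda>_. borel", simplified])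
next
  assume k: "k \<notin> J"
  have "(\<lambda>\<omega>::nat\<Rightarrow>real. undefined::real) \<in> borel_measurable (PiM J (\<lambda>_. borel::real measure))" by simp
  moreover have "\<And>\<omega>. \<omega> \<in> space (PiM J (\<lambda>_. borel::real measure)) \<Longrightarrow> \<omega> k = undefined"
    using k by (auto simp: space_PiM PiE_def extensional_def)
  ultimately show ?thesis using measurable_cong by (metis (no_types, lifting))
qed

lemma absprod: "\<bar>a * b\<bar> \<le> (a::real)\<^sup>2 + b\<^sup>2"
proof -
  have "0 \<le> (\<bar>a\<bar> - \<bar>b\<bar>)\<^sup>2" by simp
  hence "2 * (\<bar>a\<bar> * \<bar>b\<bar>) \<le> \<bar>a\<bar>\<^sup>2 + \<bar>b\<bar>\<^sup>2" by (simp add: power2_eq_square algebra_simps)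
  hence "2 * (\<bar>a\<bar> * \<bar>b\<bar>) \<le> a\<^sup>2 + b\<^sup>2" by simp
  moreover have "0 \<le> \<bar>a\<bar> * \<bar>b\<bar>" by simp
  ultimately have "\<bar>a\<bar> * \<bar>b\<bar> \<le> a\<^sup>2 + b\<^sup>2" by linarith
  thus ?thesis by (simp add: abs_mult)
qed

locale kolm = prob_space M for M :: "'a measure" +
  fixes Z :: "nat \<Rightarrow> 'a \<Rightarrow> real" and I :: "nat set"
  assumes ind: "indep_vars (\<lambda>_. borel) Z I"
  and sqint: "\<And>k. k \<in> I \<Longrightarrow> integrable M (\<lambda>x. (Z k x)\<^sup>2)"
  and mean0: "\<And>k. k \<in> I \<Longrightarrow> expectation (Z k) = 0"
  and var1: "\<And>k. k \<in> I \<Longrightarrow> expectation (\<lambda>x. (Z k x)\<^sup>2) = 1"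
begin

lemma Zmeas[measurable]: "k \<in> I \<Longrightarrow> Z k \<in> borel_measurable M"
  using ind unfolding indep_vars_def by auto

lemma Zint: "k \<in> I \<Longrightarrow> integrable M (Z k)"
  using square_integrable_imp_integrable[OF Zmeas sqint] by auto

lemma prod_int:
  assumes "i \<in> I" "l \<in> I" and g[measurable]: "g \<in> borel_measurable M" and gb: "\<And>x. \<bar>g x\<bar> \<le> 1"
  shows "integrable M (\<lambda>x. g x * Z i x * Z l x)"
proof (rule Bochner_Integration.integrable_bound[where f="\<lambda>x. (Z i x)\<^sup>2 + (Z l x)\<^sup>2"])
  show "integrable M (\<lambda>x. ((Z i x)\<^sup>2 + (Z l x)\<^sup>2))"
    using sqint assms by auto
  show "(\<lambda>x. g x * Z i x * Z l x) \<in> borel_measurable M" using assms by measurable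
  show "AE x in M. norm (g x * Z i x * Z l x) \<le> norm ((Z i x)\<^sup>2 + (Z l x)\<^sup>2)"
  proof (intro AE_I2)
    fix x
    have "\<bar>g x * Z i x * Z l x\<bar> = \<bar>g x\<bar> * \<bar>Z i x * Z l x\<bar>" by (simp add: abs_mult)
    also have "\<dots> \<le> 1 * \<bar>Z i x * Z l x\<bar>" by (intro mult_right_mono gb) auto
    also have "\<dots> \<le> (Z i x)\<^sup>2 + (Z l x)\<^sup>2"
      using absprod[of "Z i x" "Z l x"] by simp
    finally show "norm (g x * Z i x * Z l x) \<le> norm ((Z i x)\<^sup>2 + (Z l x)\<^sup>2)" by simp
  qed
qed

lemma orth:
  assumes J: "finite J" "J \<subseteq> I" "i \<in> J" "l \<in> I" "l \<notin> J"
    and f[measurable]: "f \<in> borel_measurable (PiM J (\<lambda>_. borel))" and fb: "\<And>\<omega>. \<bar>f \<omega>\<bar> \<le> 1"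
  shows "expectation (\<lambda>x. f (restrict (\<lambda>k. Z k x) J) * Z i x * Z l x) = 0"
proof -
  have iv: "indep_var (PiM J (\<lambda>_. borel)) (\<lambda>x. restrict (\<lambda>k. Z k x) J)
      (PiM {l} (\<lambda>_. borel)) (\<lambda>x. restrict (\<lambda>k. Z k x) {l})"
    using J by (intro indep_var_restrict[OF ind]) auto
  have m1: "(\<lambda>\<omega>. f \<omega> * \<omega> i) \<in> borel_measurable (PiM J (\<lambda>_. borel))"
    using J by measurable
  have m2: "(\<lambda>\<omega>. \<omega> l) \<in> borel_measurable (PiM {l} (\<lambda>_. borel))"
    by measurable
  have iv2: "indep_var borel ((\<lambda>\<omega>. f \<omega> * \<omega> i) \<circ> (\<lambda>x. restrict (\<lambda>k. Z k x) J))
     borel ((\<lambda>\<omega>. \<omega> l) \<circ> (\<lambda>x. restrict (\<lambda>k. Z k x) {l}))"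
    by (rule indep_var_compose[OF iv m1 m2])
  have e1: "((\<lambda>\<omega>. f \<omega> * \<omega> i) \<circ> (\<lambda>x. restrict (\<lambda>k. Z k x) J)) = (\<lambda>x. f (restrict (\<lambda>k. Z k x) J) * Z i x)"
    using J by (auto simp: fun_eq_iff)
  have e2: "((\<lambda>\<omega>. \<omega> l) \<circ> (\<lambda>x. restrict (\<lambda>k. Z k x) {l})) = Z l"
    by (auto simp: fun_eq_iff)
  have iv3: "indep_var borel (\<lambda>x. f (restrict (\<lambda>k. Z k x) J) * Z i x) borel (Z l)"
    using iv2 unfolding e1 e2 .
  have mr: "(\<lambda>x. restrict (\<lambda>k. Z k x) J) \<in> measurable M (PiM J (\<lambda>_. borel))"
    using J by (intro measurable_restrict) auto
  have int1: "integrable M (\<lambda>x. f (restrict (\<lambda>k. Z k x) J) * Z i x)"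
  proof (rule Bochner_Integration.integrable_bound[OF Zint])
    show "i \<in> I" using J by auto
    show "(\<lambda>x. f (restrict (\<lambda>k. Z k x) J) * Z i x) \<in> borel_measurable M"
      using J mr by (intro borel_measurable_times measurable_compose[OF mr f] Zmeas) auto
    show "AE x in M. norm (f (restrict (\<lambda>k. Z k x) J) * Z i x) \<le> norm (Z i x)"
      using fb by (intro AE_I2) (auto simp: abs_mult intro!: mult_left_le_one_le)
  qed
  have "expectation (\<lambda>x. f (restrict (\<lambda>k. Z k x) J) * Z i x * Z l x)
     = expectation (\<lambda>x. f (restrict (\<lambda>k. Z k x) J) * Z i x) * expectation (Z l)"
    by (rule indep_var_lebesgue_integral[OF iv3 int1 Zint[OF J(4)]])
  also have "\<dots> = 0" using mean0[OF J(4)] by simp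
  finally show ?thesis .
qed

lemma quad:
  fixes v v' :: "nat \<Rightarrow> 'h::real_inner"
  assumes K: "finite K" "finite K'" "K \<subseteq> I" "K' \<subseteq> I"
    and g[measurable]: "g \<in> borel_measurable M" and gb: "\<And>x. \<bar>g x\<bar> \<le> 1"
  shows "integrable M (\<lambda>x. g x * inner (\<Sum>i\<in>K. Z i x *\<^sub>R v i) (\<Sum>l\<in>K'. Z l x *\<^sub>R v' l))"
    and "expectation (\<lambda>x. g x * inner (\<Sum>i\<in>K. Z i x *\<^sub>R v i) (\<Sum>l\<in>K'. Z l x *\<^sub>R v' l))
       = (\<Sum>i\<in>K. \<Sum>l\<in>K'. inner (v i) (v' l) * expectation (\<lambda>x. g x * Z i x * Z l x))"
proof -
  have eq: "(\<lambda>x. g x * inner (\<Sum>i\<in>K. Z i x *\<^sub>R v i) (\<Sum>l\<in>K'. Z l x *\<^sub>R v' l))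
     = (\<lambda>x. \<Sum>i\<in>K. \<Sum>l\<in>K'. inner (v i) (v' l) * (g x * Z i x * Z l x))"
    by (simp add: fun_eq_iff inner_sum_left inner_sum_right sum_distrib_left mult_ac, subst sum.swap, simp add: mult_ac)
  have int: "\<And>i l. i \<in> K \<Longrightarrow> l \<in> K' \<Longrightarrow> integrable M (\<lambda>x. g x * Z i x * Z l x)"
    using K by (intro prod_int gb g) auto
  show "integrable M (\<lambda>x. g x * inner (\<Sum>i\<in>K. Z i x *\<^sub>R v i) (\<Sum>l\<in>K'. Z l x *\<^sub>R v' l))"
    unfolding eq using int by (intro Bochner_Integration.integrable_sum Bochner_Integration.integrable_mult_right) auto
  show "expectation (\<lambda>x. g x * inner (\<Sum>i\<in>K. Z i x *\<^sub>R v i) (\<Sum>l\<in>K'. Z l x *\<^sub>R v' l))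
       = (\<Sum>i\<in>K. \<Sum>l\<in>K'. inner (v i) (v' l) * expectation (\<lambda>x. g x * Z i x * Z l x))"
    unfolding eq using int
    by (subst Bochner_Integration.integral_sum, fastforce intro!: Bochner_Integration.integrable_sum Bochner_Integration.integrable_mult_right, intro sum.cong refl,
        subst Bochner_Integration.integral_sum, auto)
qed

end



definition psum :: "(nat \<Rightarrow> 'a \<Rightarrow> real) \<Rightarrow> (nat \<Rightarrow> 'h::real_vector) \<Rightarrow> nat \<Rightarrow> nat \<Rightarrow> 'a \<Rightarrow> 'h" where
  "psum Z w m j x = (\<Sum>k\<in>{m..<j}. Z k x *\<^sub>R w k)"

lemma sumdelta: "finite K \<Longrightarrow> x \<in> K \<Longrightarrow> (\<Sum>y\<in>K. f y * (if x = y then 1 else 0)) = (f x::real)"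
  by (subst sum.cong[OF refl, where h="\<lambda>y. if x = y then f y else 0"]) auto

context kolm begin

lemma Sn2:
  fixes w :: "nat \<Rightarrow> 'h::real_inner"
  assumes K: "finite K" "K \<subseteq> I"
  shows "integrable M (\<lambda>x. (norm (\<Sum>k\<in>K. Z k x *\<^sub>R w k))\<^sup>2)"
    and "expectation (\<lambda>x. (norm (\<Sum>k\<in>K. Z k x *\<^sub>R w k))\<^sup>2) = (\<Sum>k\<in>K. (norm (w k))\<^sup>2)"
proof -
  have eq: "(\<lambda>x. (norm (\<Sum>k\<in>K. Z k x *\<^sub>R w k))\<^sup>2) =
      (\<lambda>x. (\<lambda>_. 1) x * inner (\<Sum>k\<in>K. Z k x *\<^sub>R w k) (\<Sum>k\<in>K. Z k x *\<^sub>R w k))"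
    by (simp add: power2_norm_eq_inner)
  show "integrable M (\<lambda>x. (norm (\<Sum>k\<in>K. Z k x *\<^sub>R w k))\<^sup>2)"
    unfolding eq by (rule quad(1)) (use K in auto)
  have e: "expectation (\<lambda>x. Z i x * Z l x) = (if i = l then 1 else 0)"
    if "i \<in> K" "l \<in> K" for i l
  proof (cases "i = l")
    case True
    have "i \<in> I" using that K by auto
    then show ?thesis using var1[of i] True by (simp add: power2_eq_square)
  next
    case False
    have "expectation (\<lambda>x. (\<lambda>_. 1::real) (restrict (\<lambda>k. Z k x) {i}) * Z i x * Z l x) = 0"
      using False that K by (intro orth[where f="\<lambda>_. 1" and J="{i}"]) auto
    then show ?thesis using False by simp
  qed
  show "expectation (\<lambda>x. (norm (\<Sum>k\<in>K. Z k x *\<^sub>R w k))\<^sup>2) = (\<Sum>k\<in>K. (norm (w k))\<^sup>2)"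
    unfolding eq
    apply (subst quad(2)[OF K(1) K(1) K(2) K(2)])
      apply simp
     apply simp
    apply (intro sum.cong refl)
    apply (simp add: e sumdelta K power2_norm_eq_inner cong: sum.cong)
    done
qed

lemma KI:
  fixes w :: "nat \<Rightarrow> 'h::real_inner"
  assumes mI: "{m..<n} \<subseteq> I" and mn: "m \<le> n" and t: "t > 0"
  shows "prob {x\<in>space M. \<exists>j\<in>{m..n}. t < norm (psum Z w m j x)} \<le> (\<Sum>k\<in>{m..<n}. (norm (w k))\<^sup>2) / t\<^sup>2"
proof -
  define S where "S j x = psum Z w m j x" for j x
  define P where "P j x \<longleftrightarrow> t < norm (S j x) \<and> (\<forall>i\<in>{m..<j}. norm (S i x) \<le> t)" for j x
  define ind where "ind j x = (if P j x then 1 else 0::real)" for j x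
  define F where "F j \<omega> = (if t < sqrt (\<Sum>i'\<in>{m..<j}. \<Sum>l\<in>{m..<j}. \<omega> i' * \<omega> l * inner (w i') (w l)) \<and>
      (\<forall>i\<in>{m..<j}. sqrt (\<Sum>i'\<in>{m..<i}. \<Sum>l\<in>{m..<i}. \<omega> i' * \<omega> l * inner (w i') (w l)) \<le> t) then 1 else 0::real)"
    for j and \<omega> :: "nat \<Rightarrow> real"
  have indF: "ind j = (\<lambda>x. F j (restrict (\<lambda>k. Z k x) {m..<j}))" for j
  proof
    fix x
    have *: "sqrt (\<Sum>i'\<in>{m..<i}. \<Sum>l\<in>{m..<i}. restrict (\<lambda>k. Z k x) {m..<j} i' * restrict (\<lambda>k. Z k x) {m..<j} l * inner (w i') (w l)) = norm (S i x)" if "i \<le> j" for i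
      using that by (auto simp: S_def psum_def norm_lincomb intro!: sum.cong arg_cong[where f=sqrt])
    show "ind j x = F j (restrict (\<lambda>k. Z k x) {m..<j})"
      unfolding ind_def F_def P_def using *[of j] * by auto
  qed
  have Fm: "F j \<in> borel_measurable (PiM {m..<j} (\<lambda>_. borel))" for j
  proof -
    let ?N = "PiM {m..<j} (\<lambda>_. borel::real measure)"
    have sm: "(\<lambda>x. (\<Sum>i'\<in>{m..<i}. \<Sum>l\<in>{m..<i}. x i' * x l * inner (w i') (w l))) \<in> borel_measurable ?N" for i
      by (intro borel_measurable_sum borel_measurable_times comp_any borel_measurable_const)
    have p: "Measurable.pred ?N (\<lambda>x. sqrt (\<Sum>i'\<in>{m..<i}. \<Sum>l\<in>{m..<i}. x i' * x l * inner (w i') (w l)) \<le> t)" for i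
      using sm[of i] by measurable
    have p1: "Measurable.pred ?N (\<lambda>x. t < sqrt (\<Sum>i'\<in>{m..<j}. \<Sum>l\<in>{m..<j}. x i' * x l * inner (w i') (w l)))"
      using sm[of j] by measurable
    have p2: "Measurable.pred ?N (\<lambda>x. \<forall>i\<in>{m..<j}. sqrt (\<Sum>i'\<in>{m..<i}. \<Sum>l\<in>{m..<i}. x i' * x l * inner (w i') (w l)) \<le> t)"
      by (rule pred_intros_finite(3)) (auto intro: p)
    show ?thesis unfolding F_def
      by (rule measurable_If) (auto intro: pred_intros_logic(3)[OF p1 p2])
  qed
  have mr: "(\<lambda>x. restrict (\<lambda>k. Z k x) {m..<j}) \<in> measurable M (PiM {m..<j} (\<lambda>_. borel))" if "j \<le> n" for j
    using that mI by (intro measurable_restrict) (auto intro!: Zmeas simp: subset_iff)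
  have indm: "ind j \<in> borel_measurable M" if "j \<le> n" for j
    unfolding indF using measurable_compose[OF mr[OF that] Fm] by (simp add: comp_def)
  have indb: "\<bar>ind j x\<bar> \<le> 1" for j x by (simp add: ind_def)
  have intind: "integrable M (ind j)" if "j \<le> n" for j
    by (rule integrable_const_bound[where B=1]) (auto simp: indb indm that)
  have ind0: "0 \<le> ind j x" for j x by (simp add: ind_def)
  define V where "V = (\<Sum>k\<in>{m..<n}. (norm (w k))\<^sup>2)"
  have Sdef: "S j x = (\<Sum>k\<in>{m..<j}. Z k x *\<^sub>R w k)" for j x by (simp add: S_def psum_def)
  have Ssplit: "S n x = S j x + (\<Sum>k\<in>{j..<n}. Z k x *\<^sub>R w k)" if "m \<le> j" "j \<le> n" for j x
    unfolding Sdef using that by (simp add: sum.atLeastLessThan_concat)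
  have intSn: "integrable M (\<lambda>x. (norm (S n x))\<^sup>2)" and ESn: "expectation (\<lambda>x. (norm (S n x))\<^sup>2) = V"
    unfolding Sdef V_def using Sn2[of "{m..<n}" w] mI by auto
  { fix j assume j: "j \<in> {m..n}"
    have JI: "{m..<j} \<subseteq> I" "{j..<n} \<subseteq> I" using j mI by auto
    have q: "integrable M (\<lambda>x. ind j x * inner (\<Sum>k\<in>K. Z k x *\<^sub>R w k) (\<Sum>k\<in>K'. Z k x *\<^sub>R w k))"
      if "K \<subseteq> I" "K' \<subseteq> I" "finite K" "finite K'" for K K'
      using that j by (intro quad(1) indm indb) auto
    have i1: "integrable M (\<lambda>x. ind j x * (norm (S j x))\<^sup>2)"
      unfolding Sdef power2_norm_eq_inner using q JI by auto
    have i2: "integrable M (\<lambda>x. ind j x * (norm (S n x))\<^sup>2)"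
      unfolding Sdef power2_norm_eq_inner using q mI by auto
    have i3: "integrable M (\<lambda>x. ind j x * inner (S j x) (\<Sum>k\<in>{j..<n}. Z k x *\<^sub>R w k))"
      unfolding Sdef using q JI by auto
    have cross: "expectation (\<lambda>x. ind j x * inner (S j x) (\<Sum>k\<in>{j..<n}. Z k x *\<^sub>R w k)) = 0"
    proof -
      have "expectation (\<lambda>x. ind j x * Z i x * Z l x) = 0" if "i \<in> {m..<j}" "l \<in> {j..<n}" for i l
        unfolding indF using that JI by (intro orth Fm indb) (auto simp: F_def)
      then show ?thesis
        unfolding Sdef using j JI by (subst quad(2)) (auto intro!: indm indb)
    qed
    have pw1: "t\<^sup>2 * ind j x \<le> ind j x * (norm (S j x))\<^sup>2" for x
    proof (cases "P j x")
      case True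
      then have "t < norm (S j x)" by (simp add: P_def)
      then have "t\<^sup>2 \<le> (norm (S j x))\<^sup>2" using t by (intro power_mono) auto
      then show ?thesis using True by (simp add: ind_def)
    qed (simp add: ind_def)
    have pw2: "ind j x * (norm (S j x))\<^sup>2 + 2 * (ind j x * inner (S j x) (\<Sum>k\<in>{j..<n}. Z k x *\<^sub>R w k))
        \<le> ind j x * (norm (S n x))\<^sup>2" for x
    proof -
      define D where "D = (\<Sum>k\<in>{j..<n}. Z k x *\<^sub>R w k)"
      have "(norm (S n x))\<^sup>2 = (norm (S j x))\<^sup>2 + 2 * inner (S j x) D + (norm D)\<^sup>2"
        using Ssplit[of j x] j unfolding D_def[symmetric]
        by (simp add: power2_norm_eq_inner inner_add_left inner_add_right inner_commute)
      then have "(norm (S j x))\<^sup>2 + 2 * inner (S j x) D \<le> (norm (S n x))\<^sup>2" by simp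
      from mult_left_mono[OF this ind0[of j x]] show ?thesis
        unfolding D_def by (simp add: algebra_simps)
    qed
    have "expectation (\<lambda>x. t\<^sup>2 * ind j x) \<le> expectation (\<lambda>x. ind j x * (norm (S j x))\<^sup>2)"
      using pw1 i1 j by (intro integral_mono) (auto intro!: indm intind)
    also have "\<dots> = expectation (\<lambda>x. ind j x * (norm (S j x))\<^sup>2 + 2 * (ind j x * inner (S j x) (\<Sum>k\<in>{j..<n}. Z k x *\<^sub>R w k)))"
      using i1 i3 cross by simp
    also have "\<dots> \<le> expectation (\<lambda>x. ind j x * (norm (S n x))\<^sup>2)"
      using pw2 i1 i2 i3 by (intro integral_mono) auto
    finally have "expectation (\<lambda>x. t\<^sup>2 * ind j x) \<le> expectation (\<lambda>x. ind j x * (norm (S n x))\<^sup>2)" .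
    note this i2
  } note step = this
  define E where "E = {x\<in>space M. \<exists>j\<in>{m..n}. t < norm (S j x)}"
  have sumind: "(\<Sum>j\<in>{m..n}. ind j x) = indicator E x" if x: "x \<in> space M" for x
  proof (cases "\<exists>j\<in>{m..n}. t < norm (S j x)")
    case False
    then have "ind j x = 0" if "j \<in> {m..n}" for j using that by (auto simp: ind_def P_def)
    then show ?thesis using False by (simp add: E_def)
  next
    case True
    define j0 where "j0 = (LEAST j. j \<in> {m..n} \<and> t < norm (S j x))"
    have j0: "j0 \<in> {m..n}" "t < norm (S j0 x)"
      using LeastI_ex[OF True[unfolded Bex_def]] unfolding j0_def by auto
    have j0min: "\<not> t < norm (S i x)" if "i < j0" for i
    proof (cases "m \<le> i")
      case True then show ?thesis
        using not_less_Least[of i "\<lambda>j. j \<in> {m..n} \<and> t < norm (S j x)"] that j0 unfolding j0_def[symmetric]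
        by auto
    next
      case False then have "S i x = 0" by (simp add: S_def psum_def)
      then show ?thesis using t by simp
    qed
    have "ind j x = (if j = j0 then 1 else 0)" if "j \<in> {m..n}" for j
    proof (cases "j = j0")
      case True then show ?thesis using j0 j0min by (auto simp: ind_def P_def not_less)
    next
      case False
      then have "j < j0 \<or> j0 < j" by auto
      then have "\<not> P j x"
      proof
        assume "j < j0" then show ?thesis using j0min[of j] by (simp add: P_def)
      next
        assume "j0 < j" then have "j0 \<in> {m..<j}" using j0 by auto
        then show ?thesis using j0(2) by (auto simp: P_def not_le)
      qed
      then show ?thesis using False by (simp add: ind_def)
    qed
    then have "(\<Sum>j\<in>{m..n}. ind j x) = (\<Sum>j\<in>{m..n}. if j = j0 then 1 else 0)"
      by (intro sum.cong) auto
    also have "\<dots> = 1" using j0 by simp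
    finally show ?thesis using True x by (simp add: E_def)
  qed
  have "E \<inter> space M = E" by (auto simp: E_def)
  then have "t\<^sup>2 * prob E = t\<^sup>2 * expectation (indicator E)"
    by simp
  also have "\<dots> = t\<^sup>2 * expectation (\<lambda>x. \<Sum>j\<in>{m..n}. ind j x)"
  proof -
    have "expectation (indicator E) = expectation (\<lambda>x. \<Sum>j\<in>{m..n}. ind j x)"
      by (rule Bochner_Integration.integral_cong[OF refl]) (simp add: sumind)
    then show ?thesis by simp
  qed
  also have "\<dots> = (\<Sum>j\<in>{m..n}. expectation (\<lambda>x. t\<^sup>2 * ind j x))"
    by (subst Bochner_Integration.integral_sum) (auto intro!: indm intind simp: sum_distrib_left)
  also have "\<dots> \<le> (\<Sum>j\<in>{m..n}. expectation (\<lambda>x. ind j x * (norm (S n x))\<^sup>2))"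
    using step by (intro sum_mono) auto
  also have "\<dots> = expectation (\<lambda>x. (\<Sum>j\<in>{m..n}. ind j x) * (norm (S n x))\<^sup>2)"
    using step by (subst Bochner_Integration.integral_sum[symmetric]) (auto simp: sum_distrib_right)
  also have "\<dots> \<le> expectation (\<lambda>x. (norm (S n x))\<^sup>2)"
  proof (rule integral_mono_AE)
    show "integrable M (\<lambda>x. (\<Sum>j\<in>{m..n}. ind j x) * (norm (S n x))\<^sup>2)"
      using step by (auto simp: sum_distrib_right intro!: Bochner_Integration.integrable_sum)
    show "integrable M (\<lambda>x. (norm (S n x))\<^sup>2)" by (rule intSn)
    show "AE x in M. (\<Sum>j\<in>{m..n}. ind j x) * (norm (S n x))\<^sup>2 \<le> (norm (S n x))\<^sup>2"
      by (intro AE_I2) (auto simp: sumind indicator_def)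
  qed
  also have "\<dots> = V" by (rule ESn)
  finally have "t\<^sup>2 * prob E \<le> V" .
  then show ?thesis using t unfolding E_def S_def V_def by (simp add: field_simps)
qed

end



lemma layer:
  fixes y \<delta> :: real
  assumes y: "0 \<le> y" and d: "0 < \<delta>"
  shows "ennreal y \<le> ennreal \<delta> + (\<Sum>i. ennreal (\<delta> * 2 ^ Suc i) * (if \<delta> * 2 ^ i < y then 1 else 0))"
proof (cases "y \<le> \<delta>")
  case True then show ?thesis by (simp add: add_increasing2 ennreal_leI)
next
  case False
  obtain N where N: "y / \<delta> < 2 ^ N" using real_arch_pow[of 2 "y/\<delta>"] by auto
  have "\<delta> * 2 ^ N \<le> \<delta> * 2 ^ Suc N" using d by simp
  moreover have "y < \<delta> * 2 ^ N" using N d by (simp add: field_simps)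
  ultimately have "y \<le> \<delta> * 2 ^ Suc N" by linarith
  then have ex: "\<exists>i. y \<le> \<delta> * 2 ^ Suc i" by blast
  define i0 where "i0 = (LEAST i. y \<le> \<delta> * 2 ^ Suc i)"
  have i0: "y \<le> \<delta> * 2 ^ Suc i0" unfolding i0_def by (rule LeastI_ex[OF ex])
  have i0': "\<delta> * 2 ^ i0 < y"
  proof (cases i0)
    case 0 then show ?thesis using False by simp
  next
    case (Suc k)
    then have "\<not> y \<le> \<delta> * 2 ^ Suc k" using not_less_Least[of k "\<lambda>i. y \<le> \<delta> * 2 ^ Suc i"] unfolding i0_def[symmetric] by auto
    then show ?thesis using Suc by simp
  qed
  have "ennreal y \<le> ennreal (\<delta> * 2 ^ Suc i0) * (if \<delta> * 2 ^ i0 < y then 1 else 0)"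
    using i0 i0' by (simp add: ennreal_leI)
  also have "\<dots> \<le> (\<Sum>i. ennreal (\<delta> * 2 ^ Suc i) * (if \<delta> * 2 ^ i < y then 1 else 0))"
    using sum_le_suminf[OF summableI, of "{i0}" "\<lambda>i. ennreal (\<delta> * 2 ^ Suc i) * (if \<delta> * 2 ^ i < y then 1 else 0)"]
    by auto
  also have "\<dots> \<le> ennreal \<delta> + \<dots>" by simp
  finally show ?thesis .
qed

context kolm begin

lemma psnm:
  fixes w :: "nat \<Rightarrow> 'h::real_inner"
  assumes "{m..<j} \<subseteq> I"
  shows "(\<lambda>x. norm (psum Z w m j x)) \<in> borel_measurable M"
proof -
  have "(\<lambda>x. (\<Sum>i\<in>{m..<j}. \<Sum>l\<in>{m..<j}. Z i x * Z l x * inner (w i) (w l))) \<in> borel_measurable M"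
    using assms by (intro borel_measurable_sum borel_measurable_times Zmeas borel_measurable_const) auto
  then have "(\<lambda>x. sqrt (\<Sum>i\<in>{m..<j}. \<Sum>l\<in>{m..<j}. Z i x * Z l x * inner (w i) (w l))) \<in> borel_measurable M"
    by measurable
  then show ?thesis by (simp add: psum_def norm_lincomb)
qed

lemma ESf:
  fixes w :: "nat \<Rightarrow> 'h::real_inner"
  assumes mI: "{m..<n} \<subseteq> I" and mn: "m \<le> n"
  shows "(\<integral>\<^sup>+ x. ennreal (Max ((\<lambda>j. norm (psum Z w m j x)) ` {m..n})) \<partial>M)
     \<le> ennreal (5 * sqrt (\<Sum>k\<in>{m..<n}. (norm (w k))\<^sup>2))"
proof -
  define V where "V = (\<Sum>k\<in>{m..<n}. (norm (w k))\<^sup>2)"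
  define y where "y x = Max ((\<lambda>j. norm (psum Z w m j x)) ` {m..n})" for x
  have ym: "y \<in> borel_measurable M" unfolding y_def using mI
    by (intro borel_measurable_Max psnm) auto
  have y0: "0 \<le> y x" for x unfolding y_def
    by (rule order_trans[OF norm_ge_zero Max_ge[where x="norm (psum Z w m m x)"]]) (use mn in auto)
  have ygt: "(t < y x) \<longleftrightarrow> (\<exists>j\<in>{m..n}. t < norm (psum Z w m j x))" for t x
    unfolding y_def using mn by (subst Max_gr_iff) auto
  have V0: "0 \<le> V" by (simp add: V_def sum_nonneg)
  show ?thesis
  proof (cases "V = 0")
    case True
    then have "\<forall>k\<in>{m..<n}. (norm (w k))\<^sup>2 = 0" unfolding V_def
      by (subst sum_nonneg_eq_0_iff[symmetric]) auto
    then have wk: "w k = 0" if "k \<in> {m..<n}" for k using that by auto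
    have "psum Z w m j x = 0" if "j \<in> {m..n}" for j x
      unfolding psum_def using that by (intro sum.neutral) (auto simp: wk)
    then have "y x = 0" for x unfolding y_def using mn
      by (subst Max_eq_iff) auto
    then show ?thesis unfolding y_def[symmetric] by simp
  next
    case False
    then have Vp: "0 < V" using V0 by simp
    define \<delta> where "\<delta> = sqrt V"
    have dp: "0 < \<delta>" using Vp by (simp add: \<delta>_def)
    have d2: "\<delta>\<^sup>2 = V" using V0 by (simp add: \<delta>_def)
    define A where "A i = {x\<in>space M. \<delta> * 2 ^ i < y x}" for i :: nat
    have As: "A i \<in> sets M" for i unfolding A_def using ym by measurable
    have pA: "prob (A i) \<le> V / (\<delta> * 2 ^ i)\<^sup>2" for i
    proof -
      have "A i = {x\<in>space M. \<exists>j\<in>{m..n}. \<delta> * 2 ^ i < norm (psum Z w m j x)}"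
        unfolding A_def ygt ..
      then show ?thesis unfolding V_def using KI[OF mI mn, of "\<delta> * 2 ^ i" w] dp by simp
    qed
    have trm: "ennreal (\<delta> * 2 ^ Suc i) * emeasure M (A i) \<le> ennreal (2 * \<delta> * (1/2) ^ i)" for i
    proof -
      have "\<delta> * 2 ^ Suc i * prob (A i) \<le> \<delta> * 2 ^ Suc i * (V / (\<delta> * 2 ^ i)\<^sup>2)"
        using pA[of i] dp by (intro mult_left_mono) auto
      also have "\<dots> = 2 * \<delta> * (1/2) ^ i"
        using dp unfolding d2[symmetric] by (simp add: power2_eq_square field_simps power_one_over)
      finally have "\<delta> * 2 ^ Suc i * prob (A i) \<le> 2 * \<delta> * (1/2) ^ i" .
      then show ?thesis
        using dp by (simp add: emeasure_eq_measure ennreal_mult[symmetric] ennreal_leI del: power_Suc)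
    qed
    have fm: "(\<lambda>x. ennreal (\<delta> * 2 ^ Suc i) * indicator (A i) x) \<in> borel_measurable M" for i
      using As by measurable
    have "(\<integral>\<^sup>+ x. ennreal (y x) \<partial>M) \<le>
        (\<integral>\<^sup>+ x. (ennreal \<delta> + (\<Sum>i. ennreal (\<delta> * 2 ^ Suc i) * indicator (A i) x)) \<partial>M)"
    proof (intro nn_integral_mono)
      fix x assume x: "x \<in> space M"
      have "(\<lambda>i. ennreal (\<delta> * 2 ^ Suc i) * indicator (A i) x) =
            (\<lambda>i. ennreal (\<delta> * 2 ^ Suc i) * (if \<delta> * 2 ^ i < y x then 1 else 0))"
        using x by (auto simp: A_def indicator_def fun_eq_iff)
      then show "ennreal (y x) \<le> ennreal \<delta> + (\<Sum>i. ennreal (\<delta> * 2 ^ Suc i) * indicator (A i) x)"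
        using layer[OF y0 dp] by simp
    qed
    also have "\<dots> = ennreal \<delta> + (\<Sum>i. ennreal (\<delta> * 2 ^ Suc i) * emeasure M (A i))"
      using fm As
      by (subst nn_integral_add) (auto simp: nn_integral_suminf nn_integral_cmult_indicator emeasure_space_1)
    also have "\<dots> \<le> ennreal \<delta> + (\<Sum>i. ennreal (2 * \<delta> * (1/2) ^ i))"
      by (intro add_left_mono suminf_le summableI trm)
    also have "(\<Sum>i. ennreal (2 * \<delta> * (1/2) ^ i)) = ennreal (4 * \<delta>)"
    proof -
      have s: "(\<lambda>i. 2 * \<delta> * (1/2::real) ^ i) sums (2 * \<delta> * 2)"
        using sums_mult[OF geometric_sums[of "1/2::real"], of "2*\<delta>"] by simp
      then show ?thesis
        using dp by (subst suminf_ennreal2) (auto simp: sums_summable[OF s] sums_unique[OF s, symmetric])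
    qed
    also have "ennreal \<delta> + ennreal (4 * \<delta>) = ennreal (5 * sqrt V)"
      using dp by (simp add: ennreal_plus[symmetric] \<delta>_def del: ennreal_plus)
    finally show ?thesis unfolding y_def V_def .
  qed
qed

end



context kolm begin

lemma ESinf:
  fixes w :: "nat \<Rightarrow> 'h::real_inner"
  assumes mI: "{m..} \<subseteq> I" and sw: "summable (\<lambda>k. (norm (w k))\<^sup>2)"
  shows "(\<integral>\<^sup>+ x. (SUP j. ennreal (norm (psum Z w m j x))) \<partial>M) \<le> ennreal (5 * sqrt (\<Sum>k. (norm (w (k + m)))\<^sup>2))"
proof -
  define Y where "Y n x = ennreal (Max ((\<lambda>j. norm (psum Z w m j x)) ` {m..m+n}))" for n x
  have eq: "(SUP j. ennreal (norm (psum Z w m j x))) = (SUP n. Y n x)" for x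
  proof (rule antisym)
    show "(SUP j. ennreal (norm (psum Z w m j x))) \<le> (SUP n. Y n x)"
    proof (rule SUP_least)
      fix j
      show "ennreal (norm (psum Z w m j x)) \<le> (SUP n. Y n x)"
      proof (cases "m \<le> j")
        case True
        then have "ennreal (norm (psum Z w m j x)) \<le> Y j x" unfolding Y_def by (intro ennreal_leI Max_ge) auto
        also have "\<dots> \<le> (SUP n. Y n x)" by (rule SUP_upper) simp
        finally show ?thesis .
      next
        case False then show ?thesis by (simp add: psum_def)
      qed
    qed
    show "(SUP n. Y n x) \<le> (SUP j. ennreal (norm (psum Z w m j x)))"
    proof (rule SUP_least)
      fix n
      have "Max ((\<lambda>j. norm (psum Z w m j x)) ` {m..m+n}) \<in> (\<lambda>j. norm (psum Z w m j x)) ` {m..m+n}"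
        by (rule Max_in) auto
      then obtain j where "Max ((\<lambda>j. norm (psum Z w m j x)) ` {m..m+n}) = norm (psum Z w m j x)"
        by (metis (no_types, lifting) imageE)
      then have "Y n x = ennreal (norm (psum Z w m j x))" by (simp add: Y_def)
      also have "\<dots> \<le> (SUP j. ennreal (norm (psum Z w m j x)))" by (rule SUP_upper) simp
      finally show "Y n x \<le> \<dots>" .
    qed
  qed
  have inc: "incseq Y"
  proof (intro incseq_SucI le_funI)
    fix n x
    show "Y n x \<le> Y (Suc n) x" unfolding Y_def
      by (intro ennreal_leI Max_mono image_mono) auto
  qed
  have Ym: "Y n \<in> borel_measurable M" for n
  proof -
    have "(\<lambda>x. Max ((\<lambda>j. norm (psum Z w m j x)) ` {m..m+n})) \<in> borel_measurable M"
      by (intro borel_measurable_Max psnm) (use mI in auto)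
    then show ?thesis unfolding Y_def by measurable
  qed
  have sh: "summable (\<lambda>k. (norm (w (k + m)))\<^sup>2)" using summable_ignore_initial_segment[OF sw] .
  have bd: "integral\<^sup>N M (Y n) \<le> ennreal (5 * sqrt (\<Sum>k. (norm (w (k + m)))\<^sup>2))" for n
  proof -
    have "integral\<^sup>N M (Y n) \<le> ennreal (5 * sqrt (\<Sum>k\<in>{m..<m+n}. (norm (w k))\<^sup>2))"
      unfolding Y_def by (rule ESf) (use mI in auto)
    also have "(\<Sum>k\<in>{m..<m+n}. (norm (w k))\<^sup>2) = (\<Sum>k<n. (norm (w (k + m)))\<^sup>2)"
      by (induct n) (auto simp: add.commute)
    also have "\<dots> \<le> (\<Sum>k. (norm (w (k + m)))\<^sup>2)"
      by (rule sum_le_suminf[OF sh]) auto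
    finally show ?thesis by (simp add: ennreal_leI)
  qed
  have "(\<integral>\<^sup>+ x. (SUP j. ennreal (norm (psum Z w m j x))) \<partial>M) = (\<integral>\<^sup>+ x. (SUP n. Y n x) \<partial>M)"
    by (simp add: eq)
  also have "\<dots> = (SUP n. integral\<^sup>N M (Y n))"
    by (rule nn_integral_monotone_convergence_SUP[OF inc Ym])
  also have "\<dots> \<le> ennreal (5 * sqrt (\<Sum>k. (norm (w (k + m)))\<^sup>2))"
    by (rule SUP_least) (rule bd)
  finally show ?thesis .
qed

lemma psum_split: "m \<le> p \<Longrightarrow> p \<le> j \<Longrightarrow> psum Z w m j x = psum Z w m p x + psum Z w p j x"
  by (simp add: psum_def sum.atLeastLessThan_concat)

lemma kolm_conv:
  fixes w :: "nat \<Rightarrow> 'h::{real_inner, complete_space}"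
  assumes mI: "{m..} \<subseteq> I" and sw: "summable (\<lambda>k. (norm (w k))\<^sup>2)"
  shows "AE x in M. convergent (\<lambda>j. psum Z w m j x)"
proof -
  define Osc where "Osc x = (INF p. SUP j. ennreal (norm (psum Z w (m + p) j x)))" for x
  have Om: "Osc \<in> borel_measurable M"
  proof -
    have "(\<lambda>x. ennreal (norm (psum Z w (m + p) j x))) \<in> borel_measurable M" for p j
    proof -
      have "{m+p..<j} \<subseteq> I" using mI by auto
      then have "(\<lambda>x. norm (psum Z w (m + p) j x)) \<in> borel_measurable M" by (rule psnm)
      then show ?thesis by measurable
    qed
    then show ?thesis unfolding Osc_def by measurable
  qed
  have T: "\<exists>N. \<forall>n\<ge>N. norm (\<Sum>k. (norm (w (k + n)))\<^sup>2) < r" if "0 < r" for r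
    using suminf_exist_split[OF that sw] by simp
  have "integral\<^sup>N M Osc \<le> 0 + ennreal e" if e: "0 < e" for e
  proof -
    obtain N where N: "\<And>n. n \<ge> N \<Longrightarrow> norm (\<Sum>k. (norm (w (k + n)))\<^sup>2) < (e/5)\<^sup>2"
      using T[of "(e/5)\<^sup>2"] e by auto
    define p where "p = N"
    have "(\<Sum>k. (norm (w (k + (m + p))))\<^sup>2) < (e/5)\<^sup>2" using N[of "m+p"] by (simp add: p_def)
    then have s: "sqrt (\<Sum>k. (norm (w (k + (m + p))))\<^sup>2) < e/5"
    proof -
      have "sqrt (\<Sum>k. (norm (w (k + (m + p))))\<^sup>2) < sqrt ((e/5)\<^sup>2)"
        by (rule real_sqrt_less_mono) fact
      then show ?thesis using e by simp
    qed
    have "integral\<^sup>N M Osc \<le> (\<integral>\<^sup>+ x. (SUP j. ennreal (norm (psum Z w (m + p) j x))) \<partial>M)"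
      unfolding Osc_def by (intro nn_integral_mono INF_lower) auto
    also have "\<dots> \<le> ennreal (5 * sqrt (\<Sum>k. (norm (w (k + (m + p))))\<^sup>2))"
      by (rule ESinf) (use mI sw in auto)
    also have "\<dots> \<le> ennreal e" using s by (intro ennreal_leI) simp
    finally show ?thesis by simp
  qed
  then have "integral\<^sup>N M Osc \<le> 0" by (rule ennreal_le_epsilon)
  then have "integral\<^sup>N M Osc = 0" by simp
  then have "AE x in M. Osc x = 0" using nn_integral_0_iff_AE[OF Om] by simp
  then show ?thesis
  proof (rule AE_mp, intro AE_I2 impI)
    fix x assume O0: "Osc x = 0"
    show "convergent (\<lambda>j. psum Z w m j x)"
    proof (rule Cauchy_convergent, rule metric_CauchyI)
      fix e :: real assume e: "0 < e"
      have "Osc x < ennreal (e/2)" using O0 e by simp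
      then obtain p where p: "(SUP j. ennreal (norm (psum Z w (m + p) j x))) < ennreal (e/2)"
        unfolding Osc_def by (auto simp: INF_less_iff)
      have pj: "norm (psum Z w (m + p) j x) < e/2" for j
      proof -
        have "ennreal (norm (psum Z w (m + p) j x)) < ennreal (e/2)"
          using le_less_trans[OF SUP_upper[OF UNIV_I] p] .
        then show ?thesis using e by (simp add: ennreal_less_iff)
      qed
      show "\<exists>N. \<forall>i\<ge>N. \<forall>j\<ge>N. dist (psum Z w m i x) (psum Z w m j x) < e"
      proof (intro exI allI impI)
        fix i j assume i: "m + p \<le> i" and j: "m + p \<le> j"
        have "dist (psum Z w m i x) (psum Z w m j x) = norm (psum Z w (m+p) i x - psum Z w (m+p) j x)"
          using psum_split[of m "m+p" i w x] psum_split[of m "m+p" j w x] i j by (simp add: dist_norm)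
        also have "\<dots> \<le> norm (psum Z w (m+p) i x) + norm (psum Z w (m+p) j x)" by (rule norm_triangle_ineq4)
        also have "\<dots> < e" using pj[of i] pj[of j] by simp
        finally show "dist (psum Z w m i x) (psum Z w m j x) < e" .
      qed
    qed
  qed
qed

end



lemma rev_sum: "(\<Sum>l<Suc N. g (Suc N - l)) = (\<Sum>k\<in>{1..Suc N}. (g k :: 'b::comm_monoid_add))"
proof -
  have "(\<Sum>l<Suc N. g (Suc N - l)) = (\<Sum>l<Suc N. g (Suc (N - l)))"
    by (intro sum.cong) (auto simp: Suc_diff_le)
  also have "\<dots> = (\<Sum>i<Suc N. g (Suc i))"
    using sum.nat_diff_reindex[of "\<lambda>i. g (Suc i)" "Suc N"] by simp
  also have "\<dots> = (\<Sum>k\<in>{1..Suc N}. g k)"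
    by (rule sum.reindex_bij_witness[of _ "\<lambda>k. k - 1" Suc]) auto
  finally show ?thesis .
qed

lemma diag: "(\<Sum>n<N. \<Sum>k\<in>{1..Suc n}. f (Suc n) k) = (\<Sum>l<N. \<Sum>k\<in>{1..<N - l + 1}. (f (k + l) k :: 'b::comm_monoid_add))"
proof (induct N)
  case 0 then show ?case by simp
next
  case (Suc N)
  have step: "(\<Sum>k\<in>{1..<Suc N - l + 1}. f (k + l) k) = (\<Sum>k\<in>{1..<N - l + 1}. f (k + l) k) + f (Suc N) (Suc N - l)"
    if "l < N" for l
  proof -
    have "{1..<Suc N - l + 1} = insert (N - l + 1) {1..<N - l + 1}" using that by auto
    then show ?thesis using that by (simp add: add.commute Suc_diff_le)
  qed
  have A: "(\<Sum>l<N. \<Sum>k\<in>{1..<Suc N - l + 1}. f (k + l) k) = (\<Sum>l<N. \<Sum>k\<in>{1..<N - l + 1}. f (k + l) k) + (\<Sum>l<N. f (Suc N) (Suc N - l))"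
    unfolding sum.distrib[symmetric] by (intro sum.cong refl step) simp
  have B: "(\<Sum>l<Suc N. \<Sum>k\<in>{1..<Suc N - l + 1}. f (k + l) k)
      = (\<Sum>l<N. \<Sum>k\<in>{1..<Suc N - l + 1}. f (k + l) k) + f (Suc N) 1"
    by (simp add: add.commute)
  have C: "(\<Sum>l<N. f (Suc N) (Suc N - l)) + f (Suc N) 1 = (\<Sum>k\<in>{1..Suc N}. f (Suc N) k)"
    using rev_sum[of "f (Suc N)" N] by simp
  have D: "(\<Sum>n<Suc N. \<Sum>k\<in>{1..Suc n}. f (Suc n) k) = (\<Sum>n<N. \<Sum>k\<in>{1..Suc n}. f (Suc n) k) + (\<Sum>k\<in>{1..Suc N}. f (Suc N) k)"
    by (rule sum.lessThan_Suc)
  show ?case unfolding D B A Suc.hyps C[symmetric] by (simp only: add.assoc)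
qed

lemma tannery_like:
  fixes T :: "nat \<Rightarrow> nat \<Rightarrow> 'b::{real_normed_vector, complete_space}"
  assumes T0: "\<And>l. T l 0 = 0" and Tb: "\<And>l M. norm (T l M) \<le> b l" and sb: "summable b"
    and Tc: "\<And>l. convergent (T l)"
  shows "convergent (\<lambda>N. \<Sum>l<N. T l (N - l))"
proof (rule Cauchy_convergent, rule metric_CauchyI)
  fix e :: real assume e: "0 < e"
  have b0: "0 \<le> b l" for l by (rule order_trans[OF norm_ge_zero Tb[of l 0]])
  obtain L where L: "\<And>n. n \<ge> L \<Longrightarrow> norm (\<Sum>i. b (i + n)) < e / 4"
    using suminf_exist_split[of "e/4" b] e sb by auto
  have tail: "(\<Sum>l\<in>{L..<Q}. b l) < e / 4" for Q
  proof -
    have "(\<Sum>l\<in>{L..<Q}. b l) \<le> (\<Sum>i<Q - L. b (i + L))"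
    proof (cases "L \<le> Q")
      case True
      have "(\<Sum>l\<in>{L..<Q}. b l) = (\<Sum>i<Q - L. b (i + L))"
        using True by (intro sum.reindex_bij_witness[of _ "\<lambda>i. i + L" "\<lambda>l. l - L"]) auto
      then show ?thesis by simp
    qed simp
    also have "\<dots> \<le> (\<Sum>i. b (i + L))"
      by (rule sum_le_suminf[OF summable_ignore_initial_segment[OF sb]]) (auto intro: b0)
    also have "\<dots> < e / 4" using L[of L] by simp
    finally show ?thesis .
  qed
  define d where "d = e / (2 * (real L + 1))"
  have d: "0 < d" using e by (simp add: d_def)
  have ex: "\<forall>l. \<exists>K. \<forall>M\<ge>K. \<forall>M'\<ge>K. dist (T l M) (T l M') < d"
  proof
    fix l show "\<exists>K. \<forall>M\<ge>K. \<forall>M'\<ge>K. dist (T l M) (T l M') < d"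
      using convergent_Cauchy[OF Tc[of l]] d unfolding Cauchy_def by blast
  qed
  from choice[OF ex] obtain K where K0': "\<forall>l. \<forall>M\<ge>K l. \<forall>M'\<ge>K l. dist (T l M) (T l M') < d" by blast
  have K: "\<And>l M M'. M \<ge> K l \<Longrightarrow> M' \<ge> K l \<Longrightarrow> dist (T l M) (T l M') < d"
    using K0' by blast
  define K0 where "K0 = Max (K ` {..<L}) + L"
  have K0: "K l \<le> K0 - L" if "l < L" for l using that unfolding K0_def by (auto intro: Max_ge)
  show "\<exists>N0. \<forall>N\<ge>N0. \<forall>N'\<ge>N0. dist (\<Sum>l<N. T l (N - l)) (\<Sum>l<N'. T l (N' - l)) < e"
  proof (intro exI allI impI)
    fix N N' assume N: "K0 + L \<le> N" and N': "K0 + L \<le> N'"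
    define Q where "Q = max N N'"
    have ext: "(\<Sum>l<R. T l (R - l)) = (\<Sum>l<Q. T l (R - l))" if "R \<le> Q" for R
    proof -
      have "(\<Sum>l<Q. T l (R - l)) = (\<Sum>l<R. T l (R - l)) + (\<Sum>l\<in>{R..<Q}. T l (R - l))"
        using sum.atLeastLessThan_concat[of 0 R Q "\<lambda>l. T l (R - l)"] that by (simp add: atLeast0LessThan)
      also have "(\<Sum>l\<in>{R..<Q}. T l (R - l)) = 0" by (intro sum.neutral) (auto simp: T0)
      finally show ?thesis by simp
    qed
    have LQ: "L \<le> Q" using N by (simp add: Q_def)
    have "dist (\<Sum>l<N. T l (N - l)) (\<Sum>l<N'. T l (N' - l)) = norm (\<Sum>l<Q. T l (N - l) - T l (N' - l))"
      using ext[of N] ext[of N'] by (simp add: Q_def dist_norm sum_subtractf)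
    also have "\<dots> \<le> (\<Sum>l<Q. norm (T l (N - l) - T l (N' - l)))" by (rule norm_sum)
    also have "\<dots> = (\<Sum>l<L. norm (T l (N - l) - T l (N' - l))) + (\<Sum>l\<in>{L..<Q}. norm (T l (N - l) - T l (N' - l)))"
      using sum.atLeastLessThan_concat[of 0 L Q "\<lambda>l. norm (T l (N - l) - T l (N' - l))"] LQ by (simp add: atLeast0LessThan)
    also have "\<dots> \<le> (\<Sum>l<L. d) + (\<Sum>l\<in>{L..<Q}. 2 * b l)"
    proof (intro add_mono sum_mono)
      fix l assume l: "l \<in> {..<L}"
      have "K l \<le> N - l" "K l \<le> N' - l" using K0[of l] l N N' by auto
      then show "norm (T l (N - l) - T l (N' - l)) \<le> d" using K[of l "N - l" "N' - l"] by (simp add: dist_norm)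
    next
      fix l
      show "norm (T l (N - l) - T l (N' - l)) \<le> 2 * b l"
        using norm_triangle_ineq4[of "T l (N - l)" "T l (N' - l)"] Tb[of l "N - l"] Tb[of l "N' - l"] by simp
    qed
    also have "\<dots> = real L * d + 2 * (\<Sum>l\<in>{L..<Q}. b l)" by (simp add: sum_distrib_left)
    also have "\<dots> < e / 2 + 2 * (e / 4)"
    proof (rule add_le_less_mono)
      show "real L * d \<le> e / 2" using e unfolding d_def by (simp add: field_simps)
      show "2 * (\<Sum>l\<in>{L..<Q}. b l) < 2 * (e / 4)" using tail[of Q] by simp
    qed
    finally show "dist (\<Sum>l<N. T l (N - l)) (\<Sum>l<N'. T l (N' - l)) < e" by simp
  qed
qed




context kolm begin

lemma main_gen:
  fixes a :: "nat \<Rightarrow> nat \<Rightarrow> real" and u :: "nat \<Rightarrow> 'h::{real_inner, complete_space}"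
  assumes I1: "{1..} \<subseteq> I" and Cp: "C > 0" and al: "\<alpha> > 1"
    and bound: "\<And>n k. 1 \<le> k \<Longrightarrow> k \<le> n \<Longrightarrow> \<bar>a n k\<bar> \<le> C * (real (n - k + 1)) powr (- \<alpha>)"
    and us: "summable (\<lambda>n. (norm (u (Suc n)))\<^sup>2)"
  shows "AE x in M. summable (\<lambda>n. (\<Sum>k=1..Suc n. a (Suc n) k * Z k x) *\<^sub>R u (Suc n))"
proof -
  define w where "w l k = a (k + l) k *\<^sub>R u (k + l)" for l k
  define U where "U = (\<Sum>n. (norm (u (Suc n)))\<^sup>2)"
  define B where "B l = C * (real l + 1) powr (- \<alpha>)" for l
  define W where "W l x = (SUP j. ennreal (norm (psum Z (w l) 1 j x)))" for l x
  define c where "c l = 5 * (B l * sqrt U)" for l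
  have B0: "0 \<le> B l" for l using Cp by (simp add: B_def)
  have U0: "0 \<le> U" unfolding U_def by (rule suminf_nonneg[OF us]) simp
  have wb: "(norm (w l k))\<^sup>2 \<le> (B l)\<^sup>2 * (norm (u (k + l)))\<^sup>2" if "k \<ge> 1" for l k
  proof -
    have "\<bar>a (k + l) k\<bar> \<le> B l"
      using bound[of k "k + l"] that by (simp add: B_def add.commute)
    then have "\<bar>a (k + l) k\<bar>\<^sup>2 \<le> (B l)\<^sup>2" by (intro power_mono) auto
    then show ?thesis by (simp add: w_def power_mult_distrib mult_right_mono)
  qed
  have su: "summable (\<lambda>n. (norm (u n))\<^sup>2)" by (subst summable_Suc_iff[symmetric]) (rule us)
  have sw: "summable (\<lambda>k. (norm (w l k))\<^sup>2)" for l
  proof (rule summable_comparison_test'[where N=1])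
    show "summable (\<lambda>k. (B l)\<^sup>2 * (norm (u (k + l)))\<^sup>2)"
      by (intro summable_mult summable_ignore_initial_segment su)
    show "norm ((norm (w l k))\<^sup>2) \<le> (B l)\<^sup>2 * (norm (u (k + l)))\<^sup>2" if "1 \<le> k" for k
      using wb[OF that] by simp
  qed
  have tailb: "(\<Sum>k. (norm (w l (k + 1)))\<^sup>2) \<le> (B l)\<^sup>2 * U" for l
  proof -
    have s1: "summable (\<lambda>k. (norm (w l (k + 1)))\<^sup>2)" using summable_ignore_initial_segment[OF sw[of l], of 1] .
    have s2: "summable (\<lambda>k. (norm (u (Suc (k + l))))\<^sup>2)" using summable_ignore_initial_segment[OF us, of l] by simp
    have "(\<Sum>k. (norm (w l (k + 1)))\<^sup>2) \<le> (\<Sum>k. (B l)\<^sup>2 * (norm (u (Suc (k + l))))\<^sup>2)"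
    proof (intro suminf_le s1 summable_mult s2)
      fix n
      show "(norm (w l (n + 1)))\<^sup>2 \<le> (B l)\<^sup>2 * (norm (u (Suc (n + l))))\<^sup>2"
        using wb[of "n + 1" l] by simp
    qed
    also have "\<dots> = (B l)\<^sup>2 * (\<Sum>k. (norm (u (Suc (k + l))))\<^sup>2)" by (rule suminf_mult[OF s2])
    also have "(\<Sum>k. (norm (u (Suc (k + l))))\<^sup>2) \<le> U"
    proof -
      have "U = (\<Sum>k. (norm (u (Suc (k + l))))\<^sup>2) + (\<Sum>i<l. (norm (u (Suc i)))\<^sup>2)"
        unfolding U_def using suminf_split_initial_segment[OF us, of l] by simp
      moreover have "0 \<le> (\<Sum>i<l. (norm (u (Suc i)))\<^sup>2)" by (intro sum_nonneg) auto
      ultimately show ?thesis by linarith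
    qed
    then have "(B l)\<^sup>2 * (\<Sum>k. (norm (u (Suc (k + l))))\<^sup>2) \<le> (B l)\<^sup>2 * U" by (intro mult_left_mono) auto
    finally show ?thesis .
  qed
  have psm: "(\<lambda>x. ennreal (norm (psum Z (w l) 1 j x))) \<in> borel_measurable M" for l j
  proof -
    have "{1..<j} \<subseteq> I" using I1 by auto
    then have "(\<lambda>x. norm (psum Z (w l) 1 j x)) \<in> borel_measurable M" by (rule psnm)
    then show ?thesis by measurable
  qed
  have Wm: "W l \<in> borel_measurable M" for l
    unfolding W_def using psm[of l] by measurable
  have Wint: "(\<integral>\<^sup>+ x. W l x \<partial>M) \<le> ennreal (c l)" for l
  proof -
    have "(\<integral>\<^sup>+ x. W l x \<partial>M) \<le> ennreal (5 * sqrt (\<Sum>k. (norm (w l (k + 1)))\<^sup>2))"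
      unfolding W_def by (rule ESinf) (use I1 sw in auto)
    also have "\<dots> \<le> ennreal (5 * sqrt ((B l)\<^sup>2 * U))"
      using tailb[of l] by (intro ennreal_leI mult_left_mono real_sqrt_le_mono) auto
    also have "sqrt ((B l)\<^sup>2 * U) = B l * sqrt U" using B0[of l] by (simp add: real_sqrt_mult)
    finally show ?thesis by (simp add: c_def)
  qed
  have c0: "0 \<le> c l" for l using B0 U0 by (simp add: c_def)
  have cs: "summable c"
  proof -
    have "summable (\<lambda>n. real n powr (- \<alpha>))" using al by (simp add: summable_real_powr_iff)
    then have "summable (\<lambda>n. real (Suc n) powr (- \<alpha>))"
      using summable_Suc_iff[of "\<lambda>n. real n powr (- \<alpha>)"] by blast
    then have "summable (\<lambda>l. (real l + 1) powr (- \<alpha>))" by (simp add: add.commute)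
    then have "summable (\<lambda>l. (5 * C * sqrt U) * (real l + 1) powr (- \<alpha>))" by (rule summable_mult)
    moreover have "c = (\<lambda>l. (5 * C * sqrt U) * (real l + 1) powr (- \<alpha>))"
      by (simp add: fun_eq_iff c_def B_def mult_ac)
    ultimately show ?thesis by simp
  qed
  have "(\<integral>\<^sup>+ x. (\<Sum>l. W l x) \<partial>M) = (\<Sum>l. (\<integral>\<^sup>+ x. W l x \<partial>M))"
    by (rule nn_integral_suminf[OF Wm])
  also have "\<dots> \<le> (\<Sum>l. ennreal (c l))" by (intro suminf_le summableI Wint)
  also have "\<dots> = ennreal (suminf c)" by (rule suminf_ennreal2[OF c0 cs])
  finally have le: "(\<integral>\<^sup>+ x. (\<Sum>l. W l x) \<partial>M) \<le> ennreal (suminf c)" .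
  have "(\<integral>\<^sup>+ x. (\<Sum>l. W l x) \<partial>M) \<noteq> \<infinity>"
  proof
    assume "(\<integral>\<^sup>+ x. (\<Sum>l. W l x) \<partial>M) = \<infinity>"
    with le have "\<infinity> \<le> ennreal (suminf c)" by simp
    then show False by (simp add: top_unique)
  qed
  then have AEfin: "AE x in M. (\<Sum>l. W l x) \<noteq> \<infinity>"
    by (intro nn_integral_PInf_AE) (use Wm in measurable)
  have AEconv: "AE x in M. \<forall>l. convergent (\<lambda>j. psum Z (w l) 1 j x)"
    unfolding AE_all_countable by (intro allI kolm_conv) (use I1 sw in auto)
  show ?thesis
    using AEfin AEconv
  proof eventually_elim
    case (elim x)
    have Wle: "W l x \<le> (\<Sum>l. W l x)" for l
      using sum_le_suminf[OF summableI, of "{l}" "\<lambda>l. W l x"] by auto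
    have Wfin: "W l x \<noteq> \<infinity>" for l using Wle[of l] elim(1) by (auto simp: top_unique)
    define b where "b l = enn2real (W l x)" for l
    have Wb: "W l x = ennreal (b l)" for l using Wfin[of l] by (simp add: b_def ennreal_enn2real_if)
    have Tb: "norm (psum Z (w l) 1 (M + 1) x) \<le> b l" for l M
    proof -
      have "ennreal (norm (psum Z (w l) 1 (M + 1) x)) \<le> W l x" unfolding W_def by (rule SUP_upper) simp
      then show ?thesis unfolding Wb by (simp add: ennreal_le_iff b_def)
    qed
    have sb: "summable b"
    proof (rule summable_suminf_not_top)
      show "0 \<le> b l" for l by (simp add: b_def)
      show "(\<Sum>l. ennreal (b l)) \<noteq> top" using elim(1) by (simp add: Wb[symmetric])
    qed
    have Tc: "convergent (\<lambda>M. psum Z (w l) 1 (M + 1) x)" for l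
    proof -
      from elim(2) obtain L where "(\<lambda>j. psum Z (w l) 1 j x) \<longlonglongrightarrow> L" by (auto simp: convergent_def)
      then have "(\<lambda>M. psum Z (w l) 1 (M + 1) x) \<longlonglongrightarrow> L" by (rule LIMSEQ_ignore_initial_segment)
      then show ?thesis by (auto simp: convergent_def)
    qed
    have conv: "convergent (\<lambda>N. \<Sum>l<N. psum Z (w l) 1 (N - l + 1) x)"
      using tannery_like[where T="\<lambda>l M. psum Z (w l) 1 (M + 1) x", OF _ Tb sb Tc]
      by (simp add: psum_def)
    have ident: "(\<Sum>n<N. (\<Sum>k=1..Suc n. a (Suc n) k * Z k x) *\<^sub>R u (Suc n)) = (\<Sum>l<N. psum Z (w l) 1 (N - l + 1) x)" for N
    proof -
      have "(\<Sum>n<N. (\<Sum>k=1..Suc n. a (Suc n) k * Z k x) *\<^sub>R u (Suc n))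
          = (\<Sum>n<N. \<Sum>k\<in>{1..Suc n}. (\<lambda>n k. (a n k * Z k x) *\<^sub>R u n) (Suc n) k)"
        by (simp only: scaleR_sum_left)
      also have "\<dots> = (\<Sum>l<N. \<Sum>k\<in>{1..<N - l + 1}. (\<lambda>n k. (a n k * Z k x) *\<^sub>R u n) (k + l) k)"
        by (rule diag)
      also have "\<dots> = (\<Sum>l<N. psum Z (w l) 1 (N - l + 1) x)"
        by (simp add: psum_def w_def mult.commute)
      finally show ?thesis .
    qed
    show ?case unfolding summable_iff_convergent ident by (rule conv)
  qed
qed

end


theorem mainTheorem8:
  fixes M :: "'a measure"
    and Z :: "nat \<Rightarrow> 'a \<Rightarrow> real"
    and a :: "nat \<Rightarrow> nat \<Rightarrow> real"
    and u :: "nat \<Rightarrow> 'h :: {real_inner, complete_space}"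
    and C \<alpha> :: real
  assumes "prob_space M"
    and indep: "prob_space.indep_vars M (\<lambda>_. borel) Z {1..}"
    and symm: "\<And>k. k \<ge> 1 \<Longrightarrow> symmetric_rv M (Z k)"
    and var_int: "\<And>k. k \<ge> 1 \<Longrightarrow> integrable M (\<lambda>x. (Z k x)\<^sup>2)"
    and var1: "\<And>k. k \<ge> 1 \<Longrightarrow> prob_space.expectation M (\<lambda>x. (Z k x)\<^sup>2) = 1"
    and C_pos: "C > 0" and alpha: "\<alpha> > 1"
    and bound: "\<And>n k. 1 \<le> k \<Longrightarrow> k \<le> n \<Longrightarrow> \<bar>a n k\<bar> \<le> C * (real (n - k + 1)) powr (- \<alpha>)"
    and u_sq: "summable (\<lambda>n. (norm (u (Suc n)))\<^sup>2)"
  shows "(AE x in M. summable (\<lambda>n. (\<Sum>k=1..Suc n. a (Suc n) k * Z k x) *\<^sub>R u (Suc n)))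
    \<and> (\<forall>\<epsilon> :: nat \<Rightarrow> real. (\<forall>n. \<epsilon> n \<in> {-1, 1}) \<longrightarrow>
         (AE x in M. summable (\<lambda>n. (\<epsilon> (Suc n) * (\<Sum>k=1..Suc n. a (Suc n) k * Z k x)) *\<^sub>R u (Suc n))))"
proof -
  interpret prob_space M by fact
  have meas: "Z k \<in> borel_measurable M" if "k \<ge> 1" for k
    using indep that unfolding indep_vars_def by auto
  have m0: "expectation (Z k) = 0" if "k \<ge> 1" for k
  proof -
    have "expectation (Z k) = integral\<^sup>L (distr M borel (Z k)) (\<lambda>y. y)"
      using meas[OF that] by (simp add: integral_distr)
    also have "\<dots> = integral\<^sup>L (distr M borel (\<lambda>x. - Z k x)) (\<lambda>y. y)"
      using symm[OF that] by (simp add: symmetric_rv_def)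
    also have "\<dots> = expectation (\<lambda>x. - Z k x)"
      using meas[OF that] by (simp add: integral_distr)
    also have "\<dots> = - expectation (Z k)" by simp
    finally show ?thesis by simp
  qed
  interpret K: kolm M Z "{1..}"
    by unfold_locales (use indep var_int m0 var1 in auto)
  show ?thesis
  proof (intro conjI allI impI)
    show "AE x in M. summable (\<lambda>n. (\<Sum>k=1..Suc n. a (Suc n) k * Z k x) *\<^sub>R u (Suc n))"
      by (rule K.main_gen[OF subset_refl C_pos alpha bound u_sq])
  next
    fix \<epsilon> :: "nat \<Rightarrow> real" assume e: "\<forall>n. \<epsilon> n \<in> {-1, 1}"
    have ab: "\<bar>\<epsilon> n\<bar> = 1" for n using e[rule_format, of n] by auto
    have us': "summable (\<lambda>n. (norm (\<epsilon> (Suc n) *\<^sub>R u (Suc n)))\<^sup>2)"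
      using u_sq by (simp add: ab)
    have "AE x in M. summable (\<lambda>n. (\<Sum>k=1..Suc n. a (Suc n) k * Z k x) *\<^sub>R (\<epsilon> (Suc n) *\<^sub>R u (Suc n)))"
      by (rule K.main_gen[OF subset_refl C_pos alpha bound us'])
    then show "AE x in M. summable (\<lambda>n. (\<epsilon> (Suc n) * (\<Sum>k=1..Suc n. a (Suc n) k * Z k x)) *\<^sub>R u (Suc n))"
      by (simp add: mult.commute)
  qed
qed

end
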